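(* Let $A\in\mathbb{R}^{n\times n}$ and $\mathbf b\in\mathbb{R}^n$ satisfy $\operatorname{rank}(\mathbf b,A\mathbf b,\dots,A^{n-1}\mathbf b)=n$. Then for every $T>n$ and every initial state $(\mathbf y,\mathbf x^0)\in\mathbb{R}^n\times L^2([-1,0];\mathbb{R}^n)$ there exists a scalar control $u\in L^2(0,T)$ such that the solution of $\dot{\mathbf x}(t)=A\mathbf x(t-1)+\mathbf b u(t)$, $\mathbf x(0)=\mathbf y$, $\mathbf x(t)=\mathbf x^0(t)$ on $[-1,0)$, satisfies $\mathbf x(t)=0$ for all $t\in[T-1,T]$.
   Context: For $u\in L^2_{loc}(0,\infty)$ and initial data $\mathbf x(0)=\mathbf y\in\mathbb{R}^n$, $\mathbf x(t)=\mathbf x^0(t)$ for $t\in[-1,0)$ with $\mathbf x^0\in L^2([-1,0];\mathbb{R}^n)$, the system $\dot{\mathbf x}(t)=A\mathbf x(t-1)+\mathbf b u(t)$, $t\ge0$, has a unique continuous solution on $[0,\infty)$. *)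

theory Defs
  imports "HOL-Analysis.Analysis"
begin

text \<open>Matrix power (note: the operator ^ on vec types is componentwise, so we define it).\<close>
fun matpow :: "real^'n^'n \<Rightarrow> nat \<Rightarrow> real^'n^'n" where
  "matpow A 0 = mat 1"
| "matpow A (Suc k) = A ** matpow A k"

definition kalman_rank :: "real^'n^'n \<Rightarrow> real^'n \<Rightarrow> nat" where
  "kalman_rank A b = dim {matpow A k *v b | k. k < CARD('n)}"

definition L2_on :: "real set \<Rightarrow> (real \<Rightarrow> 'a::euclidean_space) \<Rightarrow> bool" where
  "L2_on S f \<longleftrightarrow> set_borel_measurable lebesgue S f
     \<and> set_integrable lebesgue S (\<lambda>t. (norm (f t))^2)"

definition delay_solution ::
  "real^'n^'n \<Rightarrow> real^'n \<Rightarrow> (real \<Rightarrow> real) \<Rightarrow> real^'n \<Rightarrow> (real \<Rightarrow> real^'n)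
   \<Rightarrow> real \<Rightarrow> (real \<Rightarrow> real^'n) \<Rightarrow> bool" where
  "delay_solution A b u y x0 T x \<longleftrightarrow>
     (\<forall>t\<in>{-1..<0}. x t = x0 t) \<and> x 0 = y \<and> continuous_on {0..T} x \<and>
     (\<forall>t\<in>{0..T}. ((\<lambda>s. A *v x (s - 1) + u s *\<^sub>R b) has_integral (x t - y)) {0..t})"

end

theory Submission
  imports Defs "HOL-Computational_Algebra.Polynomial"
begin


lemma pderiv_pow_add: "(pderiv^^k) (p + q) = (pderiv^^k) p + (pderiv^^k) (q::real poly)"
  by (induction k) (auto simp: pderiv_add)

lemma pderiv_pow_smult: "(pderiv^^k) (smult c p) = smult c ((pderiv^^k) (p::real poly))"
  by (induction k) (auto simp: pderiv_smult)

lemma pderiv_pow_zero: "(pderiv^^k) (0::real poly) = 0"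
  by (induction k) auto

lemma pderiv_pow_factor:
  fixes p :: "real poly"
  assumes "k \<le> m"
  shows "\<exists>q. (pderiv^^k) (p * [:-c,1:]^m) = q * [:-c,1:]^(m-k) \<and> poly q c = (fact m / fact (m-k)) * poly p c"
  using assms
proof (induction k)
  case 0
  then show ?case by auto
next
  case (Suc k)
  then obtain q where q: "(pderiv^^k) (p * [:-c,1:]^m) = q * [:-c,1:]^(m-k)"
      "poly q c = (fact m / fact (m-k)) * poly p c" by auto
  obtain l where l: "m - k = Suc l" using Suc.prems by (metis Suc_diff_Suc Suc_le_lessD)
  have ml: "m - Suc k = l" using l by simp
  define q' where "q' = pderiv q * [:-c,1:] + smult (of_nat (Suc l)) q"
  have "(pderiv^^Suc k) (p * [:-c,1:]^m) = pderiv (q * [:-c,1:]^Suc l)"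
    using q l by simp
  also have "\<dots> = q' * [:-c,1:]^l"
  proof -
    have d: "pderiv ([:-c,1:] :: real poly) = 1" by (simp add: pderiv_pCons)
    have "pderiv (q * [:-c,1:]^Suc l) = pderiv q * [:-c,1:]^Suc l + q * (smult (of_nat (Suc l)) ([:-c,1:]^l) * pderiv [:-c,1:])"
      using pderiv_mult[of q "[:-c,1:]^Suc l"] pderiv_power_Suc[of "[:-c,1:]" l] by (simp add: ac_simps)
    also have "\<dots> = q' * [:-c,1:]^l" unfolding d q'_def
      by (simp only: power_Suc algebra_simps mult_smult_left mult_smult_right mult_1_right mult_1_left)
    finally show ?thesis .
  qed
  finally have 1: "(pderiv^^Suc k) (p * [:-c,1:]^m) = q' * [:-c,1:]^(m - Suc k)" using ml by simp
  have "fact (m-k) = (of_nat (Suc l) :: real) * fact l" using l by simp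
  moreover have "fact (m - k) \<noteq> (0::real)" by simp
  ultimately have 2: "poly q' c = (fact m / fact (m - Suc k)) * poly p c"
    using q(2) ml by (simp add: q'_def field_simps)
  show ?case using 1 2 by blast
qed

lemma pderiv_pow_root:
  fixes p :: "real poly"
  assumes "k < m"
  shows "poly ((pderiv^^k) (p * [:-c,1:]^m)) c = 0"
proof -
  obtain q where "(pderiv^^k) (p * [:-c,1:]^m) = q * [:-c,1:]^(m-k)"
    using pderiv_pow_factor[of k m p c] assms by auto
  then show ?thesis using assms by (simp add: poly_power)
qed

lemma pderiv_pow_root_top:
  fixes p :: "real poly"
  shows "poly ((pderiv^^m) (p * [:-c,1:]^m)) c = fact m * poly p c"
proof -
  obtain q where "(pderiv^^m) (p * [:-c,1:]^m) = q * [:-c,1:]^(m-m)"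
      "poly q c = (fact m / fact (m-m)) * poly p c"
    using pderiv_pow_factor[of m m p c] by auto
  then show ?thesis by simp
qed

lemma pderiv_pow_degree:
  fixes p :: "real poly"
  shows "degree p < k \<Longrightarrow> (pderiv^^k) p = 0"
proof (induction k arbitrary: p)
  case 0 then show ?case by simp
next
  case (Suc k)
  have e: "(pderiv^^Suc k) p = (pderiv^^k) (pderiv p)" by (simp add: funpow_Suc_right del: funpow.simps)
  show ?case
  proof (cases "k = 0")
    case True
    then have "degree p = 0" using Suc.prems by simp
    then have "pderiv p = 0" by (simp add: pderiv_eq_0_iff)
    then show ?thesis using e True by simp
  next
    case False
    then have "degree (pderiv p) < k" using Suc.prems by (simp add: degree_pderiv)
    then show ?thesis using e Suc.IH by simp
  qed
qed

lemma hermite: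
  fixes p0 :: "real poly" and r :: "nat \<Rightarrow> real"
  assumes "poly p0 b \<noteq> 0"
  shows "\<exists>Q. (pderiv^^N) Q = 0 \<and> (\<forall>k<N. poly ((pderiv^^k) (p0 * Q)) b = r k)"
proof (induction N)
  case 0
  show ?case by (rule exI[of _ 0]) simp
next
  case (Suc N)
  then obtain Q where Q: "(pderiv^^N) Q = 0" "\<forall>k<N. poly ((pderiv^^k) (p0 * Q)) b = r k" by auto
  define cc where "cc = (r N - poly ((pderiv^^N) (p0 * Q)) b) / (fact N * poly p0 b)"
  define Q' where "Q' = Q + smult cc ([:-b,1:]^N)"
  have deg: "degree ([:-b,1:]^N :: real poly) < Suc N" by (simp add: degree_power_eq)
  have "(pderiv^^Suc N) Q' = pderiv ((pderiv^^N) Q) + smult cc ((pderiv^^Suc N) ([:-b,1:]^N))"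
    unfolding Q'_def pderiv_pow_add pderiv_pow_smult by simp
  also have "\<dots> = 0" using Q(1) pderiv_pow_degree[OF deg] by simp
  finally have 1: "(pderiv^^Suc N) Q' = 0" .
  have eq: "(pderiv^^k) (p0 * Q') = (pderiv^^k) (p0 * Q) + smult cc ((pderiv^^k) (p0 * [:-b,1:]^N))" for k
    unfolding Q'_def by (simp add: distrib_left pderiv_pow_add pderiv_pow_smult[symmetric])
  have 2: "poly ((pderiv^^k) (p0 * Q')) b = r k" if "k < Suc N" for k
  proof (cases "k < N")
    case True
    then show ?thesis using eq[of k] Q(2) pderiv_pow_root[OF True, of p0 b] by simp
  next
    case False
    then have "k = N" using that by simp
    then show ?thesis using eq[of k] pderiv_pow_root_top[of N p0 b] assms
      by (simp add: cc_def field_simps)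
  qed
  show ?case using 1 2 by blast
qed




definition pw :: "real \<Rightarrow> real \<Rightarrow> real poly \<Rightarrow> real poly \<Rightarrow> nat \<Rightarrow> real \<Rightarrow> real" where
  "pw a b G P k s = (if s < a then 0 else if s \<le> b then poly ((pderiv^^k) G) s else poly ((pderiv^^k) P) s)"

lemma pw_deriv:
  assumes "s \<noteq> a" "s \<noteq> b"
  shows "(pw a b G P k has_real_derivative pw a b G P (Suc k) s) (at s)"
proof -
  consider "s < a" | "a < s" "s < b" | "b < s" "a < s" using assms by linarith
  then show ?thesis
  proof cases
    case 1
    show ?thesis
      by (rule has_field_derivative_transform_within_open[of "\<lambda>_. 0" _ _ "{..<a}"])
         (use 1 in \<open>auto simp: pw_def\<close>)
  next
    case 2
    show ?thesis
      by (rule has_field_derivative_transform_within_open[of "poly ((pderiv^^k) G)" _ _ "{a<..<b}"])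
         (use 2 in \<open>auto simp: pw_def poly_DERIV\<close>)
  next
    case 3
    show ?thesis
      by (rule has_field_derivative_transform_within_open[of "poly ((pderiv^^k) P)" _ _ "{max a b<..}"])
         (use 3 in \<open>auto simp: pw_def poly_DERIV\<close>)
  qed
qed

lemma pw_cont_all:
  assumes "a \<le> b" "poly ((pderiv^^k) G) a = 0" "poly ((pderiv^^k) G) b = poly ((pderiv^^k) P) b"
  shows "continuous_on S (pw a b G P k)"
proof -
  have e: "pw a b G P k = (\<lambda>s. if s \<le> a then 0 else (if s \<le> b then poly ((pderiv^^k) G) s else poly ((pderiv^^k) P) s))"
    using assms by (auto simp: pw_def fun_eq_iff)
  have c2: "continuous_on T (\<lambda>s. if s \<le> b then poly ((pderiv^^k) G) s else poly ((pderiv^^k) P) s)" for T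
    by (rule continuous_on_cases_le) (auto intro: continuous_intros simp: assms)
  show ?thesis unfolding e
    by (rule continuous_on_cases_le) (auto intro: continuous_intros c2 simp: assms)
qed

lemma pw_cont_right:
  assumes "a \<le> b" "poly ((pderiv^^k) G) b = poly ((pderiv^^k) P) b" "S \<subseteq> {a..}"
  shows "continuous_on S (pw a b G P k)"
proof -
  have c2: "continuous_on S (\<lambda>s. if s \<le> b then poly ((pderiv^^k) G) s else poly ((pderiv^^k) P) s)"
    by (rule continuous_on_cases_le) (auto intro: continuous_intros simp: assms)
  show ?thesis
    by (rule continuous_on_eq[OF c2]) (use assms in \<open>auto simp: pw_def\<close>)
qed

lemma pw_ftc:
  assumes "c \<le> d" "continuous_on {c..d} (pw a b G P k)"
  shows "(pw a b G P (Suc k) has_integral (pw a b G P k d - pw a b G P k c)) {c..d}"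
proof (rule fundamental_theorem_of_calculus_interior_strong[of "{a,b}"])
  show "(pw a b G P k has_vector_derivative pw a b G P (Suc k) x) (at x)" if "x \<in> {c<..<d} - {a, b}" for x
    using pw_deriv[of x a b G P k] that by (auto simp: has_real_derivative_iff_has_vector_derivative)
qed (use assms in auto)

lemma pw_ftc_shift:
  assumes "0 \<le> t" "continuous_on {j..t+j} (pw a b G P k)"
  shows "((\<lambda>s. pw a b G P (Suc k) (s + j)) has_integral (pw a b G P k (t+j) - pw a b G P k j)) {0..t}"
  using has_integral_shift_real_ivl[OF pw_ftc[OF _ assms(2)], of j] assms(1) by simp




fun Drec :: "(nat \<Rightarrow> real \<Rightarrow> real) \<Rightarrow> (nat \<Rightarrow> real) \<Rightarrow> nat \<Rightarrow> nat \<Rightarrow> real \<Rightarrow> real" where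
  "Drec dat iv N 0 r = (if r < 0 then dat N r else 0)"
| "Drec dat iv N (Suc m) r = (if r < 0 then dat (N - Suc m) r
      else iv (N - Suc m) + integral {0..r} (\<lambda>s. Drec dat iv N m (s - 1)))"

lemma Drec_props:
  assumes dat: "\<And>k. dat k integrable_on {-1..0}"
  shows "\<forall>T'\<ge>0. Drec dat iv N m integrable_on {-1..T'} \<and> continuous_on {0..T'} (Drec dat iv N m)"
proof (induction m)
  case 0
  show ?case
  proof (intro allI impI conjI)
    fix T' :: real assume T': "0 \<le> T'"
    have c: "continuous_on {0..T'} (Drec dat iv N 0)"
      by (rule continuous_on_eq[of _ "\<lambda>_. 0"]) auto
    have i1: "Drec dat iv N 0 integrable_on {-1..0}"
      by (rule integrable_spike_finite[of "{0}" _ _ "dat N"]) (auto intro: dat)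
    have i2: "Drec dat iv N 0 integrable_on {0..T'}"
      using c by (rule integrable_continuous_interval)
    show "Drec dat iv N 0 integrable_on {-1..T'}"
      by (rule Henstock_Kurzweil_Integration.integrable_combine[OF _ T' i1 i2]) simp
    show "continuous_on {0..T'} (Drec dat iv N 0)" by (fact c)
  qed
next
  case (Suc m)
  show ?case
  proof (intro allI impI conjI)
    fix T' :: real assume T': "0 \<le> T'"
    have "Drec dat iv N m integrable_on {-1..T'}" using Suc T' by blast
    then have sh: "(\<lambda>s. Drec dat iv N m (s - 1)) integrable_on {0..T'+1}"
      using integrable_shift_real_ivl[of "Drec dat iv N m" "-1" T' "-1"] by simp
    then have sh': "(\<lambda>s. Drec dat iv N m (s - 1)) integrable_on {0..T'}"
      by (rule integrable_subinterval_real) auto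
    have c: "continuous_on {0..T'} (Drec dat iv N (Suc m))"
      by (rule continuous_on_eq[of _ "\<lambda>r. iv (N - Suc m) + integral {0..r} (\<lambda>s. Drec dat iv N m (s - 1))"])
         (auto intro!: continuous_intros indefinite_integral_continuous_1 sh')
    have i1: "Drec dat iv N (Suc m) integrable_on {-1..0}"
      by (rule integrable_spike_finite[of "{0}" _ _ "dat (N - Suc m)"]) (auto intro: dat)
    have i2: "Drec dat iv N (Suc m) integrable_on {0..T'}"
      using c by (rule integrable_continuous_interval)
    show "Drec dat iv N (Suc m) integrable_on {-1..T'}"
      by (rule Henstock_Kurzweil_Integration.integrable_combine[OF _ T' i1 i2]) simp
    show "continuous_on {0..T'} (Drec dat iv N (Suc m))" by (fact c)
  qed
qed

lemma Drec_hasint: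
  assumes dat: "\<And>k. dat k integrable_on {-1..0}" and r: "0 \<le> r"
  shows "((\<lambda>s. Drec dat iv N m (s - 1)) has_integral (Drec dat iv N (Suc m) r - iv (N - Suc m))) {0..r}"
proof -
  have "Drec dat iv N m integrable_on {-1..r}" using Drec_props[where dat=dat, OF dat] r by blast
  then have sh: "(\<lambda>s. Drec dat iv N m (s - 1)) integrable_on {0..r+1}"
    using integrable_shift_real_ivl[of "Drec dat iv N m" "-1" r "-1"] by simp
  then have "(\<lambda>s. Drec dat iv N m (s - 1)) integrable_on {0..r}"
    by (rule integrable_subinterval_real) auto
  then show ?thesis using r by (auto intro!: integrable_integral)
qed




definition L2g :: "(real \<Rightarrow> 'a::euclidean_space) \<Rightarrow> bool" where
  "L2g F \<longleftrightarrow> F \<in> borel_measurable lebesgue \<and> integrable lebesgue (\<lambda>t. (norm (F t))^2)"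

lemma borel_to_lebesgue: "f \<in> borel_measurable borel \<Longrightarrow> f \<in> borel_measurable lebesgue"
  by (metis measurable_lborel2 measurable_completion)

lemma integrable_ind_Icc: "integrable lebesgue (indicator {a..b::real} :: real \<Rightarrow> real)"
  by (simp add: integrable_indicator_iff emeasure_lborel_Icc_eq)

lemma L2_on_iff: "L2_on S f \<longleftrightarrow> L2g (\<lambda>t. indicator S t *\<^sub>R f t)"
proof -
  have "(\<lambda>t. indicator S t *\<^sub>R (norm (f t))^2) = (\<lambda>t. (norm (indicator S t *\<^sub>R f t))^2)"
    by (auto simp: indicator_def fun_eq_iff)
  then show ?thesis unfolding L2_on_def L2g_def set_integrable_def set_borel_measurable_def by simp
qed

lemma sq2: "((a::real)+b)^2 \<le> 2*a^2 + 2*b^2"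
proof -
  have "0 \<le> (a-b)^2" by simp
  then show ?thesis by (simp add: power2_eq_square algebra_simps)
qed

lemma sq1: "(a::real) \<le> 1 + a^2"
proof -
  have "0 \<le> (a-1)^2" by simp
  then have "2*a \<le> 1 + a^2" by (simp add: power2_eq_square algebra_simps)
  moreover have "0 \<le> a^2" by simp
  ultimately show ?thesis by linarith
qed

lemma L2g_cong: "L2g F \<Longrightarrow> (\<And>t. F t = G t) \<Longrightarrow> L2g G"
proof -
  assume "L2g F" "\<And>t. F t = G t"
  then have "F = G" by auto
  then show "L2g G" using \<open>L2g F\<close> by simp
qed

lemma L2g_add:
  fixes F G :: "real \<Rightarrow> 'a::euclidean_space"
  assumes "L2g F" "L2g G" shows "L2g (\<lambda>t. F t + G t)"
  unfolding L2g_def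
proof
  show m: "(\<lambda>t. F t + G t) \<in> borel_measurable lebesgue" using assms unfolding L2g_def by auto
  have i: "integrable lebesgue (\<lambda>t. 2 * (norm (F t))^2 + 2 * (norm (G t))^2)"
    using assms unfolding L2g_def by auto
  show "integrable lebesgue (\<lambda>t. (norm (F t + G t))^2)"
  proof (rule Bochner_Integration.integrable_bound[OF i])
    show "(\<lambda>t. (norm (F t + G t))\<^sup>2) \<in> borel_measurable lebesgue" using m by measurable
    show "AE x in lebesgue. norm ((norm (F x + G x))\<^sup>2) \<le> norm (2 * (norm (F x))\<^sup>2 + 2 * (norm (G x))\<^sup>2)"
    proof (rule AE_I2)
      fix x
      have "norm (F x + G x) \<le> norm (F x) + norm (G x)" by (rule norm_triangle_ineq)
      then have "(norm (F x + G x))^2 \<le> (norm (F x) + norm (G x))^2"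
        by (simp add: power_mono)
      also have "\<dots> \<le> 2 * (norm (F x))\<^sup>2 + 2 * (norm (G x))\<^sup>2"
        using sq2[of "norm (F x)" "norm (G x)"] .
      finally show "norm ((norm (F x + G x))\<^sup>2) \<le> norm (2 * (norm (F x))\<^sup>2 + 2 * (norm (G x))\<^sup>2)"
        by simp
    qed
  qed
qed

lemma L2g_lin:
  fixes F :: "real \<Rightarrow> 'a::euclidean_space" and h :: "'a \<Rightarrow> 'b::euclidean_space"
  assumes "L2g F" "bounded_linear h" shows "L2g (\<lambda>t. h (F t))"
  unfolding L2g_def
proof
  obtain K where K: "\<And>x. norm (h x) \<le> norm x * K" "K > 0"
    using bounded_linear.pos_bounded[OF assms(2)] by blast
  have hm: "h \<in> borel_measurable borel"
    by (intro borel_measurable_continuous_onI linear_continuous_on assms(2))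
  show m: "(\<lambda>t. h (F t)) \<in> borel_measurable lebesgue"
    using measurable_compose[OF _ hm] assms unfolding L2g_def by auto
  have i: "integrable lebesgue (\<lambda>t. K^2 * (norm (F t))^2)"
    using assms unfolding L2g_def by auto
  show "integrable lebesgue (\<lambda>t. (norm (h (F t)))^2)"
  proof (rule Bochner_Integration.integrable_bound[OF i])
    show "(\<lambda>t. (norm (h (F t)))\<^sup>2) \<in> borel_measurable lebesgue" using m by measurable
    show "AE x in lebesgue. norm ((norm (h (F x)))\<^sup>2) \<le> norm (K^2 * (norm (F x))\<^sup>2)"
    proof (rule AE_I2)
      fix x
      have "(norm (h (F x)))^2 \<le> (norm (F x) * K)^2"
        using K(1)[of "F x"] by (simp add: power_mono)
      then show "norm ((norm (h (F x)))\<^sup>2) \<le> norm (K^2 * (norm (F x))\<^sup>2)"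
        by (simp add: power_mult_distrib mult.commute)
    qed
  qed
qed

lemma L2g_shift:
  fixes F :: "real \<Rightarrow> 'a::euclidean_space"
  assumes "L2g F" shows "L2g (\<lambda>t. F (t + c))"
  unfolding L2g_def
proof
  show "(\<lambda>t. F (t + c)) \<in> borel_measurable lebesgue"
  proof -
    have "(\<lambda>x. F (c + 1 *\<^sub>R x)) \<in> borel_measurable lebesgue"
      by (rule borel_measurable_affine) (use assms in \<open>auto simp: L2g_def\<close>)
    then show ?thesis by (simp add: add.commute)
  qed
  show "integrable lebesgue (\<lambda>t. (norm (F (t + c)))\<^sup>2)"
  proof -
    have "integrable lebesgue (\<lambda>x. (norm (F (c + 1 * x)))\<^sup>2)"
      by (rule lebesgue_integrable_real_affine[of "\<lambda>t. (norm (F t))\<^sup>2"]) (use assms in \<open>auto simp: L2g_def\<close>)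
    then show ?thesis by (simp add: add.commute)
  qed
qed

lemma L2g_restrict:
  fixes F :: "real \<Rightarrow> 'a::euclidean_space"
  assumes "L2g F" "S \<in> sets borel" shows "L2g (\<lambda>t. indicator S t *\<^sub>R F t)"
  unfolding L2g_def
proof
  have Sl: "S \<in> sets lebesgue" using assms(2) by simp
  show m: "(\<lambda>t. indicator S t *\<^sub>R F t) \<in> borel_measurable lebesgue"
    using assms Sl unfolding L2g_def by (intro borel_measurable_scaleR borel_measurable_indicator) auto
  show "integrable lebesgue (\<lambda>t. (norm (indicator S t *\<^sub>R F t))\<^sup>2)"
  proof (rule Bochner_Integration.integrable_bound[of _ "\<lambda>t. (norm (F t))\<^sup>2"])
    show "integrable lebesgue (\<lambda>t. (norm (F t))\<^sup>2)" using assms unfolding L2g_def by auto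
    show "(\<lambda>t. (norm (indicator S t *\<^sub>R F t))\<^sup>2) \<in> borel_measurable lebesgue" using m by measurable
    show "AE x in lebesgue. norm ((norm (indicator S x *\<^sub>R F x))\<^sup>2) \<le> norm ((norm (F x))\<^sup>2)"
      by (rule AE_I2) (auto simp: indicator_def)
  qed
qed

lemma L2g_cont:
  fixes h :: "real \<Rightarrow> 'a::euclidean_space"
  assumes "continuous_on {p..q} h" "S \<subseteq> {p..q}" "S \<in> sets borel"
  shows "L2g (\<lambda>t. indicator S t *\<^sub>R h t)"
  unfolding L2g_def
proof
  have c: "continuous_on S h" using assms continuous_on_subset by blast
  show m: "(\<lambda>t. indicator S t *\<^sub>R h t) \<in> borel_measurable lebesgue"
    by (rule borel_to_lebesgue, rule borel_measurable_continuous_on_indicator[OF assms(3) c])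
  obtain M where M0: "\<forall>x\<in>{p..q}. norm (h x) \<le> M"
    using compact_imp_bounded[OF compact_continuous_image[OF assms(1) compact_Icc]]
    unfolding bounded_iff by auto
  have M: "norm (h x) \<le> M" if "x \<in> {p..q}" for x using M0 that by blast
  have i: "integrable lebesgue (\<lambda>t. M^2 * indicator {p..q} t :: real)"
    using integrable_ind_Icc by auto
  show "integrable lebesgue (\<lambda>t. (norm (indicator S t *\<^sub>R h t))\<^sup>2)"
  proof (rule Bochner_Integration.integrable_bound[OF i])
    show "(\<lambda>t. (norm (indicator S t *\<^sub>R h t))\<^sup>2) \<in> borel_measurable lebesgue" using m by measurable
    show "AE x in lebesgue. norm ((norm (indicator S x *\<^sub>R h x))\<^sup>2) \<le> norm (M^2 * indicator {p..q} x :: real)"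
    proof (rule AE_I2)
      fix x
      show "norm ((norm (indicator S x *\<^sub>R h x))\<^sup>2) \<le> norm (M^2 * indicator {p..q} x :: real)"
      proof (cases "x \<in> S")
        case True
        then have "x \<in> {p..q}" using assms by auto
        then have "norm (h x) \<le> M" by (rule M)
        then have "(norm (h x))^2 \<le> M^2" by (simp add: power_mono)
        then show ?thesis using True \<open>x \<in> {p..q}\<close> by (simp add: indicator_def)
      qed (simp add: indicator_def)
    qed
  qed
qed

lemma L2g_integrable:
  fixes F :: "real \<Rightarrow> 'a::euclidean_space"
  assumes "L2g F" "\<And>t. t \<notin> {p..q} \<Longrightarrow> F t = 0"
  shows "integrable lebesgue F"
proof (rule Bochner_Integration.integrable_bound[of _ "\<lambda>t. indicator {p..q} t + (norm (F t))^2 :: real"])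
  show "integrable lebesgue (\<lambda>t. indicator {p..q} t + (norm (F t))^2 :: real)"
    using assms integrable_ind_Icc unfolding L2g_def by auto
  show "F \<in> borel_measurable lebesgue" using assms unfolding L2g_def by auto
  show "AE x in lebesgue. norm (F x) \<le> norm (indicator {p..q} x + (norm (F x))\<^sup>2 :: real)"
  proof (rule AE_I2)
    fix x
    show "norm (F x) \<le> norm (indicator {p..q} x + (norm (F x))\<^sup>2 :: real)"
    proof (cases "x \<in> {p..q}")
      case True
      have "norm (F x) \<le> 1 + (norm (F x))^2"
        using sq1[of "norm (F x)"] .
      then show ?thesis using True by simp
    qed (use assms in simp)
  qed
qed




lemma matpow_commute: "matpow A k ** A = A ** matpow A k"
proof (induction k)
  case (Suc k)
  then show ?case by (simp, metis matrix_mul_assoc)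
qed simp

lemma matpow_Suc_vec: "matpow A k *v (A *v v) = matpow A (Suc k) *v v"
  by (simp add: matrix_vector_mul_assoc matpow_commute)

lemma matpow_add: "matpow A (j+k) = matpow A j ** matpow A k"
  by (induction j) (simp_all add: matrix_mul_assoc)

lemma matpow_add_vec: "matpow A j *v (matpow A k *v v) = matpow A (j+k) *v v"
  by (simp add: matpow_add matrix_vector_mul_assoc)

lemma kalman_basis:
  fixes A :: "real^'n^'n" and b :: "real^'n"
  assumes "kalman_rank A b = CARD('n)"
  shows "inj_on (\<lambda>k. matpow A k *v b) {..<CARD('n)}"
    and "independent ((\<lambda>k. matpow A k *v b) ` {..<CARD('n)})"
    and "span ((\<lambda>k. matpow A k *v b) ` {..<CARD('n)}) = UNIV"
proof -
  let ?f = "\<lambda>k. matpow A k *v b"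
  let ?V = "?f ` {..<CARD('n)}"
  have V: "{matpow A k *v b | k. k < CARD('n)} = ?V" by auto
  have dV: "dim ?V = CARD('n)" using assms unfolding kalman_rank_def V .
  have "dim ?V \<le> card ?V" by (rule dim_le_card) (simp_all add: span_superset)
  moreover have "card ?V \<le> CARD('n)" using card_image_le[of "{..<CARD('n)}" ?f] by simp
  ultimately have cV: "card ?V = CARD('n)" using dV by linarith
  show "inj_on ?f {..<CARD('n)}"
    using cV by (intro eq_card_imp_inj_on) auto
  show "span ?V = UNIV" using dV dim_eq_full[of ?V] by simp
  show "independent ?V"
    by (rule card_le_dim_spanning[of ?V ?V]) (simp_all add: span_superset cV dV)
qed

lemma exists_g:
  fixes A :: "real^'n^'n" and b :: "real^'n"
  assumes "kalman_rank A b = CARD('n)"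
  shows "\<exists>g::real^'n \<Rightarrow> real. linear g \<and>
    (\<forall>k<CARD('n). g (matpow A k *v b) = (if k = CARD('n) - 1 then 1 else 0))"
proof -
  let ?f = "\<lambda>k. matpow A k *v b"
  have "\<exists>g::real^'n \<Rightarrow> real. linear g \<and> (\<forall>x\<in>?f ` {..<CARD('n)}. g x = (\<lambda>x. if x = ?f (CARD('n) - 1) then 1 else 0) x)"
    by (rule linear_independent_extend[OF kalman_basis(2)[OF assms]])
  then obtain g :: "real^'n \<Rightarrow> real" where g: "linear g"
    "\<forall>x\<in>?f ` {..<CARD('n)}. g x = (if x = ?f (CARD('n) - 1) then 1 else 0)"
    by (elim exE conjE) simp
  have inj: "inj_on ?f {..<CARD('n)}" by (rule kalman_basis(1)[OF assms])
  have "g (?f k) = (if k = CARD('n) - 1 then 1 else 0)" if "k < CARD('n)" for k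
  proof -
    have "?f k = ?f (CARD('n) - 1) \<longleftrightarrow> k = CARD('n) - 1"
      using that inj_on_eq_iff[OF inj, of k "CARD('n) - 1"] by simp
    moreover have "g (?f k) = (if ?f k = ?f (CARD('n) - 1) then 1 else 0)"
      using bspec[OF g(2), of "?f k"] that by simp
    ultimately show ?thesis by simp
  qed
  then show ?thesis using g(1) by blast
qed

lemma obs_inj:
  fixes A :: "real^'n^'n" and b :: "real^'n" and g :: "real^'n \<Rightarrow> real"
  assumes "kalman_rank A b = CARD('n)" "linear g"
    and gk: "\<And>k. k < CARD('n) \<Longrightarrow> g (matpow A k *v b) = (if k = CARD('n) - 1 then 1 else 0)"
    and z: "\<And>j. j < CARD('n) \<Longrightarrow> g (matpow A j *v v) = 0"
  shows "v = 0"
proof (rule ccontr)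
  assume nz: "v \<noteq> 0"
  let ?f = "\<lambda>k. matpow A k *v b"
  let ?n = "CARD('n)"
  have inj: "inj_on ?f {..<?n}" by (rule kalman_basis(1)[OF assms(1)])
  have "v \<in> span (?f ` {..<?n})" using kalman_basis(3)[OF assms(1)] by simp
  then have "v \<in> range (\<lambda>u. \<Sum>v\<in>?f ` {..<?n}. u v *\<^sub>R v)"
    using span_finite[of "?f ` {..<?n}"] by simp
  then obtain \<beta> where "v = (\<Sum>u\<in>?f ` {..<?n}. \<beta> u *\<^sub>R u)" by blast
  then have v: "v = (\<Sum>k<?n. \<beta> (?f k) *\<^sub>R ?f k)"
    by (simp add: sum.reindex[OF inj])
  define \<beta>' where "\<beta>' k = \<beta> (?f k)" for k
  have v': "v = (\<Sum>k<?n. \<beta>' k *\<^sub>R ?f k)" using v by (simp add: \<beta>'_def)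
  have lin: "linear (\<lambda>v. g (matpow A j *v v))" for j
    using linear_compose[OF matrix_vector_mul_linear assms(2)] by (simp add: o_def)
  have gv: "g (matpow A j *v v) = (\<Sum>k<?n. \<beta>' k * g (matpow A (j+k) *v b))" for j
  proof -
    define L where "L = (\<lambda>v. g (matpow A j *v v))"
    have lL: "linear L" using lin[of j] L_def by simp
    have "g (matpow A j *v v) = L v" using L_def by simp
    also have "\<dots> = (\<Sum>k<?n. L (\<beta>' k *\<^sub>R ?f k))" unfolding v' by (rule linear_sum[OF lL])
    also have "\<dots> = (\<Sum>k<?n. \<beta>' k * L (?f k))" using linear_scale[OF lL] by simp
    also have "\<dots> = (\<Sum>k<?n. \<beta>' k * g (matpow A (j+k) *v b))" unfolding L_def by (simp add: matpow_add_vec)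
    finally show ?thesis .
  qed
  define K where "K = {k. k < ?n \<and> \<beta>' k \<noteq> 0}"
  have "K \<noteq> {}"
  proof
    assume "K = {}"
    then have "\<beta>' k = 0" if "k < ?n" for k using that K_def by auto
    then have "v = 0" using v' by simp
    then show False using nz by simp
  qed
  have fK: "finite K" unfolding K_def by simp
  define k0 where "k0 = Max K"
  have k0K: "k0 \<in> K" using Max_in[OF fK \<open>K \<noteq> {}\<close>] k0_def by simp
  have k0max: "k \<le> k0" if "k \<in> K" for k using Max_ge[OF fK that] k0_def by simp
  define j where "j = ?n - 1 - k0"
  have k0n: "k0 < ?n" using k0K K_def by auto
  have jn: "j < ?n" using j_def k0n by simp
  have terms: "\<beta>' k * g (matpow A (j+k) *v b) = (if k = k0 then \<beta>' k0 else 0)" if "k < ?n" for k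
  proof (cases "k = k0")
    case True
    then have "j + k = ?n - 1" using j_def k0n by simp
    then show ?thesis using True gk[of "?n - 1"] by simp
  next
    case False
    show ?thesis
    proof (cases "\<beta>' k = 0")
      case False
      then have "k \<in> K" using K_def that by auto
      then have "k < k0" using k0max \<open>k \<noteq> k0\<close> by fastforce
      then have "j + k < ?n - 1" using j_def k0n by simp
      then show ?thesis using gk[of "j+k"] \<open>k \<noteq> k0\<close> by simp
    qed (use \<open>k \<noteq> k0\<close> in simp)
  qed
  have "g (matpow A j *v v) = (\<Sum>k<?n. (if k = k0 then \<beta>' k0 else 0))"
    unfolding gv by (rule sum.cong) (use terms in auto)
  also have "\<dots> = \<beta>' k0" using k0n by simp
  finally have "g (matpow A j *v v) = \<beta>' k0" .
  moreover have "\<beta>' k0 \<noteq> 0" using k0K K_def by auto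
  ultimately show False using z[OF jn] by simp
qed




lemma L2g_diff:
  fixes F G :: "real \<Rightarrow> 'a::euclidean_space"
  assumes "L2g F" "L2g G" shows "L2g (\<lambda>t. F t - G t)"
proof -
  have "L2g (\<lambda>t. (-1::real) *\<^sub>R G t)"
    by (rule L2g_lin[OF assms(2)]) (rule bounded_linear_scaleR_right)
  then have "L2g (\<lambda>t. F t + (-1::real) *\<^sub>R G t)" by (rule L2g_add[OF assms(1)])
  then show ?thesis by (rule L2g_cong) simp
qed

theorem mainTheorem4:
  fixes A :: "real^'n^'n" and b :: "real^'n" and T :: real
    and y :: "real^'n" and x0 :: "real \<Rightarrow> real^'n"
  assumes "kalman_rank A b = CARD('n)"
    and "T > real CARD('n)"
    and "L2_on {-1..0} x0"
  shows "\<exists>u :: real \<Rightarrow> real. L2_on {0<..<T} u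
           \<and> (\<exists>x. delay_solution A b u y x0 T x)
           \<and> (\<forall>x. delay_solution A b u y x0 T x \<longrightarrow> (\<forall>t\<in>{T-1..T}. x t = 0))"
proof -
  note kal = assms(1)
  define n where "n = CARD('n)"
  define Nn where "Nn = n - 1"
  have n_pos: "0 < n" unfolding n_def by simp
  have nS: "n = Suc Nn" using n_pos Nn_def by simp
  have Tn: "real n < T" using assms(2) n_def by simp
  define a :: real where "a = real Nn"
  define bb where "bb = T - 1"
  have abb: "a < bb" using Tn nS a_def bb_def by simp
  obtain g :: "real^'n \<Rightarrow> real" where g: "linear g"
    and gk: "\<And>k. k < n \<Longrightarrow> g (matpow A k *v b) = (if k = Nn then 1 else 0)"
    using exists_g[OF kal] unfolding n_def Nn_def by blast
  obtain h where h: "bij_betw h {0..<n} (UNIV :: 'n set)"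
    using ex_bij_betw_nat_finite[of "UNIV :: 'n set"] n_def by auto
  define ix where "ix = the_inv_into {0..<n} h"
  have hinj: "inj_on h {0..<n}" using h bij_betw_def by blast
  have ix_h: "ix (h k) = k" if "k < n" for k
    using the_inv_into_f_f[OF hinj] that ix_def by simp
  have h_ix: "h (ix i) = i" for i
    using f_the_inv_into_f[OF hinj] h ix_def unfolding bij_betw_def by auto
  have ix_lt: "ix i < n" for i
    using the_inv_into_into[OF hinj, of i "{0..<n}"] h ix_def unfolding bij_betw_def by auto
  define Om :: "real^'n \<Rightarrow> real^'n" where "Om v = (\<chi> i. g (matpow A (ix i) *v v))" for v
  have Om_h: "Om v $ h k = g (matpow A k *v v)" if "k < n" for v k
    using ix_h[OF that] by (simp add: Om_def)
  have linOm: "linear Om"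
  proof (rule linearI)
    fix v w :: "real^'n" and c :: real
    show "Om (v + w) = Om v + Om w"
      by (simp add: Om_def vec_eq_iff matrix_vector_right_distrib linear_add[OF g])
    show "Om (c *\<^sub>R v) = c *\<^sub>R Om v"
      by (simp add: Om_def vec_eq_iff matrix_vector_mult_scaleR linear_scale[OF g])
  qed
  have injOm: "inj Om"
    unfolding linear_inj_iff_eq_0[OF linOm]
  proof (intro allI impI)
    fix v assume "Om v = 0"
    then have "g (matpow A j *v v) = 0" if "j < n" for j
      using Om_h[OF that, of v] by simp
    then show "v = 0"
      using obs_inj[OF kal g, of v] gk unfolding n_def Nn_def by blast
  qed
  obtain Oi where linOi: "linear Oi" and OiOm: "\<And>v. Oi (Om v) = v" and OmOi: "\<And>w. Om (Oi w) = w"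
    using linear_injective_isomorphism[OF linOm injOm] by auto
  define dat where "dat k r = g (matpow A k *v x0 r)" for k r
  define iv where "iv k = g (matpow A k *v y)" for k
  have x0L2: "L2g (\<lambda>t. indicator {-1..0} t *\<^sub>R x0 t)" using assms(3) L2_on_iff by blast
  have x0int: "x0 integrable_on {-1..0}"
  proof -
    have "integrable lebesgue (\<lambda>t. indicator {-1..0::real} t *\<^sub>R x0 t)"
      by (rule L2g_integrable[OF x0L2, of "-1" 0]) (simp add: indicator_def)
    then have "set_integrable lebesgue {-1..0} x0" unfolding set_integrable_def .
    then show ?thesis using set_lebesgue_integral_eq_integral(1) by blast
  qed
  have blin: "bounded_linear (\<lambda>v. g (matpow A k *v v))" for k
    using linear_compose[OF matrix_vector_mul_linear g] by (simp add: o_def linear_conv_bounded_linear)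
  have datint: "dat k integrable_on {-1..0}" for k
  proof -
    have "dat k = (\<lambda>r. g (matpow A k *v x0 r))" by (simp add: fun_eq_iff dat_def)
    then show ?thesis using integrable_linear[OF x0int blin[of k]] by (simp add: o_def)
  qed
  define D where "D j = Drec dat iv Nn (Nn - j)" for j
  have Dneg: "D j r = dat j r" if "r < 0" "j \<le> Nn" for j r
  proof (cases "Nn - j")
    case 0 then show ?thesis using that by (simp add: D_def)
  next
    case (Suc m)
    then have "Nn - Suc m = j" using that by simp
    then show ?thesis using that Suc by (simp add: D_def)
  qed
  have D0: "D j 0 = iv j" if "j < Nn" for j
  proof -
    define m where "m = Nn - Suc j"
    have e1: "Nn - j = Suc m" using Suc_diff_Suc[OF that] m_def by simp
    have e2: "Nn - Suc m = j" using that m_def by arith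
    have "D j 0 = Drec dat iv Nn (Suc m) 0" using e1 by (simp add: D_def)
    also have "\<dots> = iv (Nn - Suc m)" by simp
    finally show ?thesis using e2 by simp
  qed
  have DNn: "D Nn r = 0" if "0 \<le> r" for r using that by (simp add: D_def)
  have Dcont: "continuous_on {0..T'} (D j)" if "0 \<le> T'" for j T'
    using Drec_props[where dat=dat, OF datint] that unfolding D_def by blast
  have Dhasint: "((\<lambda>s. D (Suc j) (s - 1)) has_integral (D j t - iv j)) {0..t}" if "j < Nn" "0 \<le> t" for j t
  proof -
    define m where "m = Nn - Suc j"
    have e1: "Nn - j = Suc m" using Suc_diff_Suc[OF that(1)] m_def by simp
    have e2: "Nn - Suc m = j" using that m_def by arith
    have "D j t = Drec dat iv Nn (Suc m) t" using e1 by (simp add: D_def)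
    moreover have "D (Suc j) = Drec dat iv Nn m" using m_def by (simp add: D_def fun_eq_iff)
    ultimately show ?thesis using Drec_hasint[where dat=dat, OF datint that(2), of iv Nn m] e2 by simp
  qed
  define r where "r k = - D k (T - 1 - real k)" for k
  obtain P where PN: "(pderiv^^Nn) P = 0" and PB0: "\<forall>k<Nn. poly ((pderiv^^k) (1 * P)) bb = r k"
    using hermite[of 1 bb Nn r] by auto
  have PB: "poly ((pderiv^^k) P) bb = r k" if "k < Nn" for k using PB0 that by simp
  define G0 where "G0 = [:iv Nn / fact Nn:] * [:-a,1:]^Nn"
  have p0b: "poly ([:-a,1:]^n) bb \<noteq> 0" using abb by (simp add: poly_power)
  obtain Q2 where Q2: "\<forall>k<n. poly ((pderiv^^k) ([:-a,1:]^n * Q2)) bb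
      = poly ((pderiv^^k) P) bb - poly ((pderiv^^k) G0) bb"
    using hermite[OF p0b, of n "\<lambda>k. poly ((pderiv^^k) P) bb - poly ((pderiv^^k) G0) bb"] by auto
  define G where "G = G0 + [:-a,1:]^n * Q2"
  have GD: "(pderiv^^k) G = (pderiv^^k) G0 + (pderiv^^k) (Q2 * [:-a,1:]^n)" for k
    unfolding G_def by (simp add: pderiv_pow_add mult.commute)
  have GA: "poly ((pderiv^^k) G) a = 0" if "k < Nn" for k
    using pderiv_pow_root[OF that, of "[:iv Nn / fact Nn:]" a]
      pderiv_pow_root[of k n Q2 a] that nS unfolding GD G0_def by simp
  have GAN: "poly ((pderiv^^Nn) G) a = iv Nn"
    using pderiv_pow_root_top[of Nn "[:iv Nn / fact Nn:]" a]
      pderiv_pow_root[of Nn n Q2 a] nS unfolding GD G0_def by simp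
  have GB: "poly ((pderiv^^k) G) bb = poly ((pderiv^^k) P) bb" if "k < n" for k
    using Q2 that unfolding G_def by (simp add: pderiv_pow_add)
  define \<phi> where "\<phi> k s = pw a bb G P k s" for k s
  have \<phi>neg: "\<phi> k s = 0" if "s < a" for k s using that by (simp add: \<phi>_def pw_def)
  have \<phi>cont: "continuous_on S (\<phi> k)" if "k < Nn" for k S
    unfolding \<phi>_def by (rule pw_cont_all) (use abb GA[OF that] GB[of k] that nS in auto)
  have \<phi>contN: "continuous_on S (\<phi> Nn)" if "S \<subseteq> {a..}" for S
    unfolding \<phi>_def by (rule pw_cont_right) (use abb GB[of Nn] that nS in auto)
  have \<phi>bb: "\<phi> k bb = r k" if "k < Nn" for k
    using abb GB[of k] PB[OF that] that nS by (simp add: \<phi>_def pw_def)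
  have \<phi>top: "\<phi> Nn s = 0" if "bb \<le> s" for s
    using abb GB[of Nn] PN that nS by (simp add: \<phi>_def pw_def)
  have \<phi>a: "\<phi> Nn a = iv Nn" using abb GAN by (simp add: \<phi>_def pw_def)
  \<comment> \<open>the trajectory in observer coordinates\<close>
  define z where "z j t = D j t + \<phi> j (t + real j)" for j t
  define zv where "zv t = (\<chi> i. z (ix i) t)" for t
  define x where "x t = (if t < 0 then x0 t else Oi (zv t))" for t
  define u where "u s = \<phi> n (s + real Nn) - g (matpow A n *v x (s - 1))" for s
  have Z1: "g (matpow A k *v x r) = z k r" if "-1 \<le> r" "k < n" for k r
  proof (cases "r < 0")
    case True
    have "r + real k < a" using True that nS a_def by simp
    then show ?thesis using True that nS Dneg[of r k]
      by (simp add: x_def z_def dat_def \<phi>neg)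
  next
    case False
    then have "g (matpow A k *v x r) = Om (x r) $ h k" using Om_h[OF that(2)] by simp
    also have "\<dots> = zv r $ h k" using False by (simp add: x_def OmOi)
    also have "\<dots> = z k r" using ix_h[OF that(2)] by (simp add: zv_def)
    finally show ?thesis .
  qed
  have Z0: "z k 0 = iv k" if "k < n" for k
  proof (cases "k < Nn")
    case True
    then show ?thesis using D0[OF True] \<phi>neg[of "real k" k] a_def by (simp add: z_def)
  next
    case False
    then have "k = Nn" using that nS by simp
    then show ?thesis using DNn[of 0] \<phi>a a_def by (simp add: z_def)
  qed
  have zv0: "zv 0 = Om y"
    by (simp add: vec_eq_iff zv_def Om_def Z0 ix_lt iv_def)
  have x0y: "x 0 = y" by (simp add: x_def zv0 OiOm)
  have REC: "((\<lambda>s. z (Suc j) (s - 1)) has_integral (z j t - z j 0)) {0..t}" if "j < Nn" "0 \<le> t" for j t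
  proof -
    have c: "continuous_on {real j..t + real j} (pw a bb G P j)"
      using \<phi>cont[OF that(1)] by (simp add: \<phi>_def)
    have i2: "((\<lambda>s. \<phi> (Suc j) (s + real j)) has_integral (\<phi> j (t + real j) - \<phi> j (real j))) {0..t}"
      using pw_ftc_shift[OF that(2) c] by (simp add: \<phi>_def)
    have "((\<lambda>s. D (Suc j) (s - 1) + \<phi> (Suc j) (s + real j)) has_integral
        ((D j t - iv j) + (\<phi> j (t + real j) - \<phi> j (real j)))) {0..t}"
      by (rule has_integral_add[OF Dhasint[OF that] i2])
    moreover have "\<phi> j (real j) = 0" using that a_def by (intro \<phi>neg) simp
    moreover have "z j 0 = iv j" using Z0 that nS by simp
    moreover have "(\<lambda>s. z (Suc j) (s - 1)) = (\<lambda>s. D (Suc j) (s - 1) + \<phi> (Suc j) (s + real j))"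
      by (simp add: z_def fun_eq_iff algebra_simps)
    ultimately show ?thesis by (simp add: z_def diff_add_eq)
  qed
  have TOP: "((\<lambda>s. \<phi> n (s + real Nn)) has_integral (z Nn t - z Nn 0)) {0..t}" if "0 \<le> t" for t
  proof -
    have c: "continuous_on {real Nn..t + real Nn} (pw a bb G P Nn)"
      using \<phi>contN[of "{real Nn..t + real Nn}"] a_def by (simp add: \<phi>_def)
    have "((\<lambda>s. \<phi> (Suc Nn) (s + real Nn)) has_integral (\<phi> Nn (t + real Nn) - \<phi> Nn (real Nn))) {0..t}"
      using pw_ftc_shift[OF that c] by (simp add: \<phi>_def)
    then show ?thesis using DNn[OF that] DNn[of 0] nS by (simp add: z_def)
  qed
  have zcont: "continuous_on {0..T} (z k)" if "k < n" for k
  proof -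
    have c1: "continuous_on {0..T} (D k)" using Dcont Tn by simp
    have c2: "continuous_on {0..T} (\<lambda>t. \<phi> k (t + real k))"
    proof (cases "k < Nn")
      case True
      show ?thesis by (intro continuous_on_compose2[OF \<phi>cont[OF True, of UNIV]] continuous_intros) auto
    next
      case False
      then have k: "k = Nn" using that nS by simp
      show ?thesis unfolding k
        by (intro continuous_on_compose2[OF \<phi>contN[of "{a..}"]] continuous_intros) (auto simp: a_def)
    qed
    show ?thesis unfolding z_def by (intro continuous_intros c1 c2)
  qed
  have zvcont: "continuous_on {0..T} zv"
    unfolding zv_def by (intro continuous_on_vec_lambda zcont ix_lt)
  have xcont: "continuous_on {0..T} x"
  proof (rule continuous_on_eq[of _ "\<lambda>t. Oi (zv t)"])
    show "continuous_on {0..T} (\<lambda>t. Oi (zv t))"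
      by (rule continuous_on_compose2[OF linear_continuous_on[OF linOi[unfolded linear_conv_bounded_linear]] zvcont]) auto
  qed (auto simp: x_def)
  have INT: "((\<lambda>s. A *v x (s - 1) + u s *\<^sub>R b) has_integral (x t - y)) {0..t}" if "0 \<le> t" "t \<le> T" for t
  proof -
    have comp: "Om (A *v x (s - 1) + u s *\<^sub>R b) $ i =
        (if ix i < Nn then z (Suc (ix i)) (s - 1) else \<phi> n (s + real Nn))" if "s \<in> {0..t}" for s i
    proof -
      let ?j = "ix i"
      have "Om (A *v x (s - 1) + u s *\<^sub>R b) $ i = g (matpow A ?j *v (A *v x (s - 1) + u s *\<^sub>R b))"
        by (simp add: Om_def)
      also have "\<dots> = g (matpow A (Suc ?j) *v x (s - 1)) + u s * g (matpow A ?j *v b)"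
        by (simp add: matrix_vector_right_distrib matrix_vector_mult_scaleR linear_add[OF g] linear_scale[OF g] matpow_Suc_vec)
      finally have e: "Om (A *v x (s - 1) + u s *\<^sub>R b) $ i = g (matpow A (Suc ?j) *v x (s - 1)) + u s * g (matpow A ?j *v b)" .
      show ?thesis
      proof (cases "?j < Nn")
        case True
        then show ?thesis using e gk[of ?j] Z1[of "s - 1" "Suc ?j"] that nS by auto
      next
        case False
        then have "?j = Nn" using ix_lt[of i] nS by simp
        then show ?thesis using e gk[of Nn] nS by (simp add: u_def)
      qed
    qed
    have hi: "((\<lambda>s. Om (A *v x (s - 1) + u s *\<^sub>R b)) has_integral (zv t - zv 0)) {0..t}"
    proof (subst has_integral_componentwise_iff, intro ballI)
      fix e :: "real^'n" assume "e \<in> Basis"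
      then obtain i where e: "e = axis i 1" by (auto simp: Basis_vec_def)
      have "((\<lambda>s. (if ix i < Nn then z (Suc (ix i)) (s - 1) else \<phi> n (s + real Nn)))
          has_integral (z (ix i) t - z (ix i) 0)) {0..t}"
      proof (cases "ix i < Nn")
        case True then show ?thesis using REC[OF True that(1)] by simp
      next
        case False
        then have "ix i = Nn" using ix_lt[of i] nS by simp
        then show ?thesis using TOP[OF that(1)] False by simp
      qed
      then have "((\<lambda>s. Om (A *v x (s - 1) + u s *\<^sub>R b) $ i) has_integral (zv t - zv 0) $ i) {0..t}"
        by (subst has_integral_cong[OF comp]) (auto simp: zv_def)
      then show "((\<lambda>s. Om (A *v x (s - 1) + u s *\<^sub>R b) \<bullet> e) has_integral (zv t - zv 0) \<bullet> e) {0..t}"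
        by (simp add: e cart_eq_inner_axis[symmetric])
    qed
    have "((Oi \<circ> (\<lambda>s. Om (A *v x (s - 1) + u s *\<^sub>R b))) has_integral Oi (zv t - zv 0)) {0..t}"
      by (rule has_integral_linear[OF hi linOi[unfolded linear_conv_bounded_linear]])
    moreover have "Oi (zv t - zv 0) = x t - y"
      using that by (simp add: linear_diff[OF linOi] x_def zv0 OiOm)
    ultimately show ?thesis by (simp add: o_def OiOm)
  qed
  have Vm: "\<forall>t. T - real n + real m \<le> t \<longrightarrow> t \<le> T \<longrightarrow> z (Nn - m) t = 0" if "m \<le> Nn" for m
    using that
  proof (induction m)
    case 0
    show ?case
    proof (intro allI impI)
      fix t assume t: "T - real n + real 0 \<le> t" "t \<le> T"
      have t0: "0 \<le> t" using t Tn by simp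
      have "bb \<le> t + real Nn" using t nS bb_def by simp
      then show "z (Nn - 0) t = 0" using DNn[OF t0] \<phi>top by (simp add: z_def)
    qed
  next
    case (Suc m)
    define j' where "j' = Nn - Suc m"
    have j'lt: "j' < Nn" using Suc.prems j'_def by simp
    have j'eq: "Suc j' = Nn - m" using Suc.prems j'_def by simp
    define c where "c = T - real n + real (Suc m)"
    have c_eq: "c = T - 1 - real j'" using Suc.prems j'_def c_def nS by simp
    have c0: "0 \<le> c" using c_def Tn by simp
    have zc: "z j' c = 0"
    proof -
      have "c + real j' = bb" using c_eq bb_def by simp
      then have "z j' c = D j' (T - 1 - real j') + \<phi> j' bb" using c_eq by (simp add: z_def)
      also have "\<dots> = 0" using \<phi>bb[OF j'lt] by (simp add: r_def)
      finally show ?thesis .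
    qed
    show ?case
    proof (intro allI impI)
      fix t assume t: "T - real n + real (Suc m) \<le> t" "t \<le> T"
      have ct: "c \<le> t" using t c_def by simp
      have zero: "((\<lambda>s. z (Suc j') (s - 1)) has_integral 0) {c..t}"
      proof -
        have "z (Suc j') (s - 1) = 0" if "s \<in> {c..t}" for s
          using Suc.IH Suc.prems that t j'eq c_def by auto
        then show ?thesis by (subst has_integral_cong[of _ _ "\<lambda>_. 0"]) auto
      qed
      have "((\<lambda>s. z (Suc j') (s - 1)) has_integral ((z j' c - z j' 0) + 0)) {0..t}"
        by (rule has_integral_combine[OF c0 ct REC[OF j'lt c0] zero])
      moreover have "((\<lambda>s. z (Suc j') (s - 1)) has_integral (z j' t - z j' 0)) {0..t}"
        using REC[OF j'lt] c0 ct by simp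
      ultimately have "z j' c - z j' 0 + 0 = z j' t - z j' 0" by (rule has_integral_unique)
      then show "z (Nn - Suc m) t = 0" using zc j'_def by simp
    qed
  qed
  have ZERO: "x t = 0" if "T - 1 \<le> t" "t \<le> T" for t
  proof -
    have t0: "\<not> t < 0" using that Tn nS by simp
    have "zv t = 0"
    proof (subst vec_eq_iff, intro allI)
      fix i
      define k where "k = ix i"
      have kn: "k < n" using ix_lt k_def by simp
      have "Nn - (Nn - k) = k" using kn nS by simp
      moreover have "T - real n + real (Nn - k) \<le> t" using that kn nS by (simp add: of_nat_diff)
      ultimately have "z k t = 0" using Vm[of "Nn - k"] that by auto
      then show "zv t $ i = 0 $ i" by (simp add: zv_def k_def)
    qed
    then show ?thesis using t0 linear_0[OF linOi] by (simp add: x_def)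
  qed
  have sol: "delay_solution A b u y x0 T x"
    unfolding delay_solution_def using x0y xcont INT by (auto simp: x_def)
  have UNIQ: "x' t = x t" if "delay_solution A b u y x0 T x'" "-1 \<le> t" "t \<le> T" for x' t
  proof -
    note x' = that(1)[unfolded delay_solution_def]
    have "\<forall>t. -1 \<le> t \<longrightarrow> t \<le> T \<longrightarrow> t < real m \<longrightarrow> x' t = x t" for m :: nat
    proof (induction m)
      case 0
      then show ?case using x' by (auto simp: x_def)
    next
      case (Suc m)
      show ?case
      proof (intro allI impI)
        fix t assume t: "-1 \<le> t" "t \<le> T" "t < real (Suc m)"
        show "x' t = x t"
        proof (cases "t < 0")
          case True then show ?thesis using x' t by (auto simp: x_def)
        next
          case False
          have i1: "((\<lambda>s. A *v x' (s - 1) + u s *\<^sub>R b) has_integral (x' t - y)) {0..t}"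
            using x' False t by auto
          have i2: "((\<lambda>s. A *v x (s - 1) + u s *\<^sub>R b) has_integral (x t - y)) {0..t}"
            using INT False t by auto
          have "((\<lambda>s. (A *v x' (s - 1) + u s *\<^sub>R b) - (A *v x (s - 1) + u s *\<^sub>R b)) has_integral
              ((x' t - y) - (x t - y))) {0..t}" by (rule has_integral_diff[OF i1 i2])
          moreover have "(A *v x' (s - 1) + u s *\<^sub>R b) - (A *v x (s - 1) + u s *\<^sub>R b) = 0"
            if "s \<in> {0..t}" for s
            using Suc.IH that t by auto
          ultimately have "(((\<lambda>_. 0) has_integral ((x' t - y) - (x t - y))) {0..t})"
            by (subst (asm) has_integral_cong) auto
          then have "(x' t - y) - (x t - y) = 0" using has_integral_unique has_integral_0 by blast
          then show ?thesis by simp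
        qed
      qed
    qed
    moreover obtain m :: nat where "t < real m" using reals_Archimedean2 by blast
    ultimately show ?thesis using that by blast
  qed
  have PnZ: "(pderiv^^n) P = 0" using PN nS by simp
  have \<phi>n: "\<phi> n (s + real Nn) = indicator {0<..T - real n} s * poly ((pderiv^^n) G) (s + real Nn)"
    if "0 < s" for s
  proof -
    have "\<not> s + real Nn < a" using that a_def by simp
    moreover have "s + real Nn \<le> bb \<longleftrightarrow> s \<le> T - real n" using nS bb_def by auto
    ultimately show ?thesis using that PnZ by (simp add: \<phi>_def pw_def indicator_def)
  qed
  have F1: "L2g (\<lambda>s. indicator {0<..T - real n} s *\<^sub>R poly ((pderiv^^n) G) (s + real Nn))"
    by (rule L2g_cont[of 0 "T - real n"]) (auto intro!: continuous_intros)
  have F2: "L2g (\<lambda>s. indicator {0<..<1} s *\<^sub>R g (matpow A n *v x0 (s - 1)))"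
  proof -
    have "L2g (\<lambda>t. g (matpow A n *v (indicator {-1..0} t *\<^sub>R x0 t)))"
      by (rule L2g_lin[OF x0L2 blin])
    then have "L2g (\<lambda>t. indicator {-1<..<0} t *\<^sub>R g (matpow A n *v (indicator {-1..0} t *\<^sub>R x0 t)))"
      by (rule L2g_restrict) simp
    then have "L2g (\<lambda>s. indicator {-1<..<0} (s + -1) *\<^sub>R g (matpow A n *v (indicator {-1..0} (s + -1) *\<^sub>R x0 (s + -1))))"
      by (rule L2g_shift)
    then show ?thesis
    proof (rule L2g_cong)
      fix s :: real
      show "indicator {-1<..<0} (s + -1) *\<^sub>R g (matpow A n *v (indicator {-1..0} (s + -1) *\<^sub>R x0 (s + -1)))
          = indicator {0<..<1} s *\<^sub>R g (matpow A n *v x0 (s - 1))"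
        by (cases "0 < s \<and> s < 1") (auto simp: indicator_def linear_0[OF g])
    qed
  qed
  have F3: "L2g (\<lambda>s. indicator {1..<T} s *\<^sub>R g (matpow A n *v Oi (zv (s - 1))))"
  proof (rule L2g_cont[of 1 T])
    have c1: "continuous_on {1..T} (\<lambda>s. zv (s - 1))"
      by (rule continuous_on_compose2[OF zvcont]) (auto intro!: continuous_intros)
    have c2: "continuous_on {1..T} (\<lambda>s. Oi (zv (s - 1)))"
      by (rule continuous_on_compose2[OF linear_continuous_on[OF linOi[unfolded linear_conv_bounded_linear]] c1]) auto
    show "continuous_on {1..T} (\<lambda>s. g (matpow A n *v Oi (zv (s - 1))))"
      by (rule continuous_on_compose2[OF linear_continuous_on[OF blin[of n]] c2]) auto
  qed auto
  have uL2: "L2_on {0<..<T} u"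
  proof -
    have "L2g (\<lambda>s. indicator {0<..T - real n} s *\<^sub>R poly ((pderiv^^n) G) (s + real Nn)
        - (indicator {0<..<1} s *\<^sub>R g (matpow A n *v x0 (s - 1))
           + indicator {1..<T} s *\<^sub>R g (matpow A n *v Oi (zv (s - 1)))))"
      by (rule L2g_diff[OF F1 L2g_add[OF F2 F3]])
    then have "L2g (\<lambda>s. indicator {0<..<T} s *\<^sub>R u s)"
    proof (rule L2g_cong)
      fix s :: real
      have T1: "1 < T" using Tn nS by simp
      show "indicator {0<..T - real n} s *\<^sub>R poly ((pderiv^^n) G) (s + real Nn)
        - (indicator {0<..<1} s *\<^sub>R g (matpow A n *v x0 (s - 1))
           + indicator {1..<T} s *\<^sub>R g (matpow A n *v Oi (zv (s - 1))))
        = indicator {0<..<T} s *\<^sub>R u s"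
      proof (cases "0 < s \<and> s < T")
        case True
        then have us: "u s = indicator {0<..T - real n} s * poly ((pderiv^^n) G) (s + real Nn)
            - g (matpow A n *v x (s - 1))" using \<phi>n[of s] by (simp add: u_def)
        show ?thesis
        proof (cases "s < 1")
          case True
          then show ?thesis using \<open>0 < s \<and> s < T\<close> us by (simp add: x_def indicator_def)
        next
          case False
          then show ?thesis using \<open>0 < s \<and> s < T\<close> us by (simp add: x_def indicator_def)
        qed
      next
        case False
        have "s \<notin> {0<..T - real n}" using False Tn nS by auto
        moreover have "s \<notin> {0<..<1}" using False T1 by auto
        moreover have "s \<notin> {1..<T}" using False by auto
        moreover have "s \<notin> {0<..<T}" using False by auto
        ultimately show ?thesis by simp
      qed
    qed
    then show ?thesis using L2_on_iff by blast
  qed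
  show ?thesis
  proof (intro exI[of _ u] conjI)
    show "L2_on {0<..<T} u" by (fact uL2)
    show "\<exists>x. delay_solution A b u y x0 T x" using sol by blast
    show "\<forall>x'. delay_solution A b u y x0 T x' \<longrightarrow> (\<forall>t\<in>{T - 1..T}. x' t = 0)"
    proof (intro allI impI ballI)
      fix x' t assume x': "delay_solution A b u y x0 T x'" and t: "t \<in> {T - 1..T}"
      have "-1 \<le> t" using t Tn nS by simp
      then have "x' t = x t" using UNIQ[OF x'] t by simp
      then show "x' t = 0" using ZERO t by simp
    qed
  qed
qed


end
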